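(* Let $k\ge 2$, and let $p,q$ be real polynomials with $\deg p=k$, $\deg q=k-1$, whose roots are real, simple and strictly interlacing, with roots of $p$ denoted $p_1<\dots<p_k$. Let $r>0$ and $\varphi\in(-\pi,\pi]$. Then all solutions $z\in\mathbb{C}$ of $\frac{q(z)}{p(z)}=re^{i\varphi}$, except at most one, lie in the closed disk $\{z:|z-\frac{p_1+p_k}{2}|\le\frac{p_k-p_1}{2}\}$. *)

theory Defs
  imports "HOL-Analysis.Analysis" "HOL-Computational_Algebra.Polynomial"
begin

end

theory Submission
  imports Defs
begin

lemma map_poly_of_real_mult:
  "map_poly (of_real :: real \<Rightarrow> complex) (p * q) = map_poly of_real p * map_poly of_real q"
  by (rule poly_eqI) (simp add: coeff_map_poly coeff_mult)

lemma map_poly_of_real_prod: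
  "map_poly (of_real :: real \<Rightarrow> complex) (\<Prod>i\<in>A. f i) = (\<Prod>i\<in>A. map_poly of_real (f i))"
proof (induction A rule: infinite_finite_induct)
  case (infinite A) then show ?case by simp
next
  case empty then show ?case by simp
next
  case (insert x F) then show ?case by (simp add: map_poly_of_real_mult)
qed

lemma poly_of_real_form:
  fixes p :: "real poly"
  assumes "p = smult c (\<Prod>i\<in>A. [:- x i, 1:])"
  shows "poly (map_poly complex_of_real p) z = of_real c * (\<Prod>i\<in>A. z - of_real (x i))"
  using assms by (simp add: map_poly_smult map_poly_of_real_prod poly_prod map_poly_pCons)

definition sec :: "complex \<Rightarrow> bool" where "sec a \<longleftrightarrow> Re a > \<bar>Im a\<bar>"

lemma sec_comb:
  assumes "sec a" "sec b" "0 \<le> l" "l \<le> 1"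
  shows "sec (of_real l * a + of_real (1 - l) * b)"
proof -
  have "\<bar>l * Im a + (1 - l) * Im b\<bar> \<le> l * \<bar>Im a\<bar> + (1-l) * \<bar>Im b\<bar>"
    using assms by (simp add: abs_mult abs_triangle_ineq[THEN order_trans])
  moreover have "l * \<bar>Im a\<bar> + (1-l) * \<bar>Im b\<bar> < l * Re a + (1-l) * Re b"
  proof (cases "l = 0")
    case True then show ?thesis using assms by (simp add: sec_def)
  next
    case False
    then have "l * \<bar>Im a\<bar> < l * Re a" using assms by (simp add: sec_def)
    moreover have "(1-l) * \<bar>Im b\<bar> \<le> (1-l) * Re b" using assms
      by (intro mult_left_mono) (auto simp: sec_def)
    ultimately show ?thesis by linarith
  qed
  ultimately show ?thesis by (simp add: sec_def)
qed

lemma sec_mult: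
  assumes "sec a" "sec b" shows "Re (a * b) > 0"
proof -
  have "\<bar>Im a\<bar> * \<bar>Im b\<bar> < Re a * Re b"
    using assms unfolding sec_def by (intro mult_strict_mono) auto
  moreover have "Im a * Im b \<le> \<bar>Im a\<bar> * \<bar>Im b\<bar>"
    using abs_ge_self[of "Im a * Im b"] by (simp add: abs_mult)
  ultimately show ?thesis by simp
qed

lemma bisect:
  assumes "a \<noteq> 0" "b \<noteq> 0" "Re (a * cnj b) > 0"
  defines "e \<equiv> a / of_real (cmod a) + b / of_real (cmod b)"
  shows "sec (cnj e * a)" "sec (cnj e * b)"
proof -
  have ea: "cnj e * a = of_real (cmod a) + (cnj b * a) / of_real (cmod b)"
    using assms(1) unfolding e_def
    by (simp add: field_simps complex_norm_square[symmetric] power2_eq_square)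
  have eb: "cnj e * b = of_real (cmod b) + (cnj a * b) / of_real (cmod a)"
    using assms(2) unfolding e_def
    by (simp add: field_simps complex_norm_square[symmetric] power2_eq_square)
  have n1: "\<bar>Im (cnj b * a)\<bar> \<le> cmod a * cmod b"
    using abs_Im_le_cmod[of "cnj b * a"] by (simp add: norm_mult mult.commute)
  have n2: "\<bar>Im (cnj a * b)\<bar> \<le> cmod a * cmod b"
    using abs_Im_le_cmod[of "cnj a * b"] by (simp add: norm_mult)
  have r1: "Re (cnj b * a) > 0" using assms(3) by (simp add: mult.commute)
  have r2: "Re (cnj a * b) > 0" using assms(3) by (simp add: algebra_simps)
  have pa: "cmod a > 0" "cmod b > 0" using assms by auto
  have "\<bar>Im (cnj b * a)\<bar> / cmod b \<le> cmod a" using n1 pa by (simp add: divide_le_eq)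
  moreover have "Re (cnj b * a) / cmod b > 0" using r1 pa by simp
  ultimately show "sec (cnj e * a)" unfolding ea sec_def
    by (simp add: Re_divide_of_real Im_divide_of_real abs_div)
  have "\<bar>Im (cnj a * b)\<bar> / cmod a \<le> cmod b" using n2 pa by (simp add: divide_le_eq mult.commute)
  moreover have "Re (cnj a * b) / cmod a > 0" using r2 pa by simp
  ultimately show "sec (cnj e * b)" unfolding eb sec_def
    by (simp add: Re_divide_of_real Im_divide_of_real abs_div)
qed

lemma Re_div_cnj:
  fixes u X :: complex assumes "Re (cnj u * X) > 0"
  shows "Re (u / X) > 0"
proof -
  have "X \<noteq> 0" using assms by auto
  then have "(cmod X)\<^sup>2 > 0" by simp
  then have "(Re X)\<^sup>2 + (Im X)\<^sup>2 > 0" by (simp add: cmod_power2)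
  moreover have "Re u * Re X + Im u * Im X > 0" using assms by simp
  ultimately show ?thesis by (simp add: Re_divide)
qed

lemma aux: "Re y > 0 \<Longrightarrow> c > 0 \<Longrightarrow> Re (of_real c * y) > 0" by simp

lemma outside_sec:
  fixes z :: complex and p1 pk :: real
  assumes "p1 < pk" "cmod (z - of_real ((p1 + pk) / 2)) > (pk - p1) / 2"
  shows "\<exists>e. \<forall>t. p1 \<le> t \<and> t \<le> pk \<longrightarrow> sec (cnj e * (z - of_real t))"
proof -
  define a where "a = z - of_real p1"
  define b where "b = z - of_real pk"
  have "(cmod (z - of_real ((p1 + pk) / 2)))\<^sup>2 > ((pk - p1) / 2)\<^sup>2"
    using assms by (intro power_strict_mono) auto
  then have "(Re z - (p1 + pk) / 2)\<^sup>2 + (Im z)\<^sup>2 > ((pk - p1) / 2)\<^sup>2"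
    by (simp add: cmod_power2)
  moreover have "Re (a * cnj b) = (Re z - (p1 + pk) / 2)\<^sup>2 + (Im z)\<^sup>2 - ((pk - p1) / 2)\<^sup>2"
    unfolding a_def b_def by (simp add: power2_eq_square field_simps)
  ultimately have pos: "Re (a * cnj b) > 0" by linarith
  have "a \<noteq> 0" "b \<noteq> 0" using pos by auto
  define e where "e = a / of_real (cmod a) + b / of_real (cmod b)"
  have sa: "sec (cnj e * a)" and sb: "sec (cnj e * b)"
    using bisect[OF \<open>a \<noteq> 0\<close> \<open>b \<noteq> 0\<close> pos] unfolding e_def by auto
  show ?thesis
  proof (intro exI allI impI)
    fix t assume t: "p1 \<le> t \<and> t \<le> pk"
    define l where "l = (pk - t) / (pk - p1)"
    have l: "0 \<le> l" "l \<le> 1" using t assms(1) by (auto simp: l_def field_simps)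
    have "l * (pk - p1) = pk - t" using assms(1) by (simp add: l_def)
    then have r: "l * p1 + (1 - l) * pk = t" by (simp add: algebra_simps)
    have "of_real l * a + of_real (1 - l) * b = z - of_real (l * p1 + (1 - l) * pk)"
      unfolding a_def b_def by (simp add: algebra_simps)
    then have "z - of_real t = of_real l * a + of_real (1 - l) * b" using r by simp
    then have "cnj e * (z - of_real t) = cnj e * (of_real l * a + of_real (1 - l) * b)"
      by simp
    also have "\<dots> = of_real l * (cnj e * a) + of_real (1 - l) * (cnj e * b)"
      by (simp add: algebra_simps)
    finally have "cnj e * (z - of_real t) = of_real l * (cnj e * a) + of_real (1 - l) * (cnj e * b)" .
    then show "sec (cnj e * (z - of_real t))"
      using sec_comb[OF sa sb l] by simp
  qed
qed

lemma sum_nonzero: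
  fixes z w :: complex and p1 pk :: real
  assumes "p1 < pk" "cmod (z - of_real ((p1 + pk) / 2)) > (pk - p1) / 2"
    "cmod (w - of_real ((p1 + pk) / 2)) > (pk - p1) / 2"
    "finite I" "I \<noteq> {}" "\<And>i. i \<in> I \<Longrightarrow> B i > 0" "\<And>i. i \<in> I \<Longrightarrow> p1 \<le> x i \<and> x i \<le> pk"
  shows "(\<Sum>i\<in>I. of_real (B i) / ((z - of_real (x i)) * (w - of_real (x i)))) \<noteq> 0"
proof -
  obtain e where e: "\<And>t. p1 \<le> t \<and> t \<le> pk \<Longrightarrow> sec (cnj e * (z - of_real t))"
    using outside_sec[OF assms(1,2)] by blast
  obtain f where f: "\<And>t. p1 \<le> t \<and> t \<le> pk \<Longrightarrow> sec (cnj f * (w - of_real t))"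
    using outside_sec[OF assms(1,3)] by blast
  define u where "u = e * f"
  have each: "Re (u * (of_real (B i) / ((z - of_real (x i)) * (w - of_real (x i))))) > 0"
    if i: "i \<in> I" for i
  proof -
    have "Re ((cnj e * (z - of_real (x i))) * (cnj f * (w - of_real (x i)))) > 0"
      using sec_mult[OF e f] assms(7)[OF i] by blast
    then have "Re (cnj u * ((z - of_real (x i)) * (w - of_real (x i)))) > 0"
      by (simp add: u_def algebra_simps)
    then have "Re (u / ((z - of_real (x i)) * (w - of_real (x i)))) > 0"
      by (rule Re_div_cnj)
    moreover have eq: "u * (of_real (B i) / ((z - of_real (x i)) * (w - of_real (x i))))
        = of_real (B i) * (u / ((z - of_real (x i)) * (w - of_real (x i))))" by simp
    ultimately show ?thesis using assms(6)[OF i] by (subst eq) (rule aux)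
  qed
  have "Re (u * (\<Sum>i\<in>I. of_real (B i) / ((z - of_real (x i)) * (w - of_real (x i))))) > 0"
    unfolding sum_distrib_left Re_sum using each assms(4,5) by (intro sum_pos) auto
  then show ?thesis by (intro notI) simp
qed

lemma reidx:
  fixes g :: "nat \<Rightarrow> real"
  assumes i: "i \<in> {1..k}"
  shows "(\<Prod>j\<in>{1..k-1}. g (if j < i then j else Suc j)) = (\<Prod>j\<in>{1..k}-{i}. g j)"
  by (rule prod.reindex_bij_witness[where i="\<lambda>j. if j < i then j else j - 1" and j="\<lambda>j. if j < i then j else Suc j"])
     (use i in auto)

theorem corollary2:
  fixes p q :: "real poly" and k :: nat and ps qs :: "nat \<Rightarrow> real"
    and r \<phi> :: real
  assumes "k \<ge> 2"
    and "degree p = k" and "degree q = k - 1"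
    and "p = smult (lead_coeff p) (\<Prod>i=1..k. [:- ps i, 1:])"
    and "q = smult (lead_coeff q) (\<Prod>i=1..k-1. [:- qs i, 1:])"
    and "strict_mono_on {1..k} ps"
    and "\<And>i. 1 \<le> i \<Longrightarrow> i \<le> k - 1 \<Longrightarrow> ps i < qs i \<and> qs i < ps (i + 1)"
    and "r > 0" and "- pi < \<phi>" and "\<phi> \<le> pi"
  shows "\<forall>z w. (poly (map_poly complex_of_real p) z \<noteq> 0 \<and>
                  poly (map_poly complex_of_real q) z / poly (map_poly complex_of_real p) z
                    = complex_of_real r * exp (\<i> * complex_of_real \<phi>) \<and>
                  cmod (z - complex_of_real ((ps 1 + ps k) / 2)) > (ps k - ps 1) / 2) \<and>
                 (poly (map_poly complex_of_real p) w \<noteq> 0 \<and>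
                  poly (map_poly complex_of_real q) w / poly (map_poly complex_of_real p) w
                    = complex_of_real r * exp (\<i> * complex_of_real \<phi>) \<and>
                  cmod (w - complex_of_real ((ps 1 + ps k) / 2)) > (ps k - ps 1) / 2)
                 \<longrightarrow> z = w"
proof -
  define P where "P = (\<lambda>z::complex. \<Prod>i\<in>{1..k}. z - of_real (ps i))"
  define Q where "Q = (\<lambda>z::complex. \<Prod>j\<in>{1..k-1}. z - of_real (qs j))"
  have pz: "\<And>z. poly (map_poly complex_of_real p) z = of_real (lead_coeff p) * P z"
    unfolding P_def by (rule poly_of_real_form[OF assms(4)])
  have qz: "\<And>z. poly (map_poly complex_of_real q) z = of_real (lead_coeff q) * Q z"
    unfolding Q_def by (rule poly_of_real_form[OF assms(5)])
  have "p \<noteq> 0" using assms(1,2) by auto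
  then have lp: "lead_coeff p \<noteq> 0" by simp
  have "degree q \<ge> 1" using assms(1,3) by linarith
  then have "q \<noteq> 0" by auto
  then have lq: "lead_coeff q \<noteq> 0" by simp
  have smono: "\<And>a b. a \<in> {1..k} \<Longrightarrow> b \<in> {1..k} \<Longrightarrow> a < b \<Longrightarrow> ps a < ps b"
    using assms(6) strict_mono_onD by blast
  have wmono: "ps a \<le> ps b" if "a \<in> {1..k}" "b \<in> {1..k}" "a \<le> b" for a b
    using smono[of a b] that by (cases "a < b") auto
  have p1k: "ps 1 < ps k" using smono[of 1 k] assms(1) by simp
  have rng: "ps 1 \<le> ps i \<and> ps i \<le> ps k" if "i \<in> {1..k}" for i
    using wmono[of 1 i] wmono[of i k] that assms(1) by simp
  have inj: "inj_on ps {1..k}"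
    using assms(6) strict_mono_on_imp_inj_on by blast
  define B where "B = (\<lambda>i. (\<Prod>j\<in>{1..k-1}. ps i - qs j) / (\<Prod>j\<in>{1..k}-{i}. ps i - ps j))"
  have Bpos: "B i > 0" if i: "i \<in> {1..k}" for i
  proof -
    define \<sigma> where "\<sigma> = (\<lambda>j::nat. if j < i then j else Suc j)"
    define \<tau> where "\<tau> = (\<lambda>j::nat. if j < i then j else j - 1)"
    have re: "(\<Prod>j\<in>{1..k-1}. ps i - ps (\<sigma> j)) = (\<Prod>j\<in>{1..k}-{i}. ps i - ps j)"
      unfolding \<sigma>_def by (rule reidx[OF i])
    have "B i = (\<Prod>j\<in>{1..k-1}. (ps i - qs j) / (ps i - ps (\<sigma> j)))"
      unfolding B_def re[symmetric] by (simp add: prod_dividef)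
    also have "\<dots> > 0"
    proof (rule prod_pos)
      fix j assume j: "j \<in> {1..k-1}"
      have qj: "ps j < qs j" "qs j < ps (j + 1)" using assms(7)[of j] j by auto
      show "(ps i - qs j) / (ps i - ps (\<sigma> j)) > 0"
      proof (cases "j < i")
        case True
        have "ps (j+1) \<le> ps i" using wmono[of "j+1" i] True i j by auto
        moreover have "ps j < ps i" using smono[of j i] True i j by auto
        ultimately show ?thesis using qj True by (simp add: \<sigma>_def)
      next
        case False
        have "ps i \<le> ps j" using wmono[of i j] False i j by auto
        moreover have "ps i < ps (Suc j)" using smono[of i "Suc j"] False i j by auto
        ultimately show ?thesis using qj False by (simp add: \<sigma>_def divide_neg_neg)
      qed
    qed
    finally show ?thesis .
  qed
  have interp: "Q z = (\<Sum>i\<in>{1..k}. of_real (B i) * (\<Prod>j\<in>{1..k}-{i}. z - of_real (ps j)))" for z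
  proof -
    define QP where "QP = (\<Prod>j\<in>{1..k-1}. [:- of_real (qs j), 1:] :: complex poly)"
    define LP where "LP = (\<Sum>i\<in>{1..k}. smult (of_real (B i)) (\<Prod>j\<in>{1..k}-{i}. [:- of_real (ps j), 1:] :: complex poly))"
    have evQ: "poly QP x = Q x" for x unfolding QP_def Q_def by (simp add: poly_prod)
    have evL: "poly LP x = (\<Sum>i\<in>{1..k}. of_real (B i) * (\<Prod>j\<in>{1..k}-{i}. x - of_real (ps j)))" for x
      unfolding LP_def by (simp add: poly_sum poly_prod)
    have dQ: "degree QP \<le> k - 1"
      unfolding QP_def using degree_prod_sum_le[of "{1..k-1}" "\<lambda>j. [:- of_real (qs j), 1:] :: complex poly"]
      by (simp add: o_def)
    have dL: "degree LP \<le> k - 1"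
      unfolding LP_def
    proof (rule degree_sum_le)
      fix i assume i: "i \<in> {1..k}"
      have "degree (\<Prod>j\<in>{1..k}-{i}. [:- of_real (ps j), 1:] :: complex poly) \<le> card ({1..k}-{i})"
        using degree_prod_sum_le[of "{1..k}-{i}" "\<lambda>j. [:- of_real (ps j), 1:] :: complex poly"]
        by (simp add: o_def)
      also have "\<dots> = k - 1" using i by simp
      finally show "degree (smult (of_real (B i)) (\<Prod>j\<in>{1..k}-{i}. [:- of_real (ps j), 1:] :: complex poly)) \<le> k - 1"
        by (rule order_trans[OF degree_smult_le])
    qed simp
    have cardA: "card ((\<lambda>i. complex_of_real (ps i)) ` {1..k}) = k"
    proof -
      have "inj_on (\<lambda>i. complex_of_real (ps i)) {1..k}"
      proof (rule inj_onI)
        fix a b assume ab: "a \<in> {1..k}" "b \<in> {1..k}" "complex_of_real (ps a) = complex_of_real (ps b)"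
        then have "ps a = ps b" by simp
        then show "a = b" using inj_onD[OF inj _ ab(1,2)] by simp
      qed
      then show ?thesis by (simp add: card_image)
    qed
    have agree: "poly QP x = poly LP x" if x: "x \<in> (\<lambda>i. complex_of_real (ps i)) ` {1..k}" for x
    proof -
      obtain i0 where i0: "i0 \<in> {1..k}" "x = of_real (ps i0)" using x by blast
      have zero: "(\<Prod>j\<in>{1..k}-{i}. x - of_real (ps j)) = 0" if "i \<in> {1..k}-{i0}" for i
        using that i0 by (subst prod_zero_iff) auto
      have rest: "(\<Sum>i\<in>{1..k}-{i0}. of_real (B i) * (\<Prod>j\<in>{1..k}-{i}. x - of_real (ps j))) = 0"
      proof (rule sum.neutral, rule ballI)
        fix i assume ii: "i \<in> {1..k}-{i0}"
        show "of_real (B i) * (\<Prod>j\<in>{1..k}-{i}. x - of_real (ps j)) = 0"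
          by (simp only: zero[OF ii] mult_zero_right)
      qed
      have "poly LP x = of_real (B i0) * (\<Prod>j\<in>{1..k}-{i0}. x - of_real (ps j))
          + (\<Sum>i\<in>{1..k}-{i0}. of_real (B i) * (\<Prod>j\<in>{1..k}-{i}. x - of_real (ps j)))"
        unfolding evL by (rule sum.remove) (use i0 in auto)
      then have "poly LP x = of_real (B i0) * (\<Prod>j\<in>{1..k}-{i0}. x - of_real (ps j))"
        using rest by simp
      also have "\<dots> = of_real (B i0 * (\<Prod>j\<in>{1..k}-{i0}. ps i0 - ps j))"
        using i0 by (simp add: of_real_prod)
      also have "B i0 * (\<Prod>j\<in>{1..k}-{i0}. ps i0 - ps j) = (\<Prod>j\<in>{1..k-1}. ps i0 - qs j)"
      proof -
        have nz: "ps i0 - ps j \<noteq> 0" if j: "j \<in> {1..k}-{i0}" for j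
        proof
          assume "ps i0 - ps j = 0"
          then have "ps i0 = ps j" by simp
          from inj_onD[OF inj this i0(1)] j show False by auto
        qed
        have "(\<Prod>j\<in>{1..k}-{i0}. ps i0 - ps j) \<noteq> 0"
          using nz by (simp add: prod_zero_iff)
        then show ?thesis unfolding B_def by simp
      qed
      also have "of_real (\<Prod>j\<in>{1..k-1}. ps i0 - qs j) = Q x"
        unfolding Q_def using i0 by (simp add: of_real_prod)
      finally show ?thesis using evQ by simp
    qed
    have "QP = LP"
      by (rule poly_eqI_degree[OF agree]) (use dQ dL cardA assms(1) in auto)
    then have "poly QP z = poly LP z" by simp
    then show ?thesis using evQ evL by simp
  qed
  have pf: "Q z / P z = (\<Sum>i\<in>{1..k}. of_real (B i) / (z - of_real (ps i)))" if nz: "P z \<noteq> 0" for z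
  proof -
    have "Q z / P z = (\<Sum>i\<in>{1..k}. of_real (B i) * (\<Prod>j\<in>{1..k}-{i}. z - of_real (ps j)) / P z)"
      by (simp add: interp sum_divide_distrib)
    also have "\<dots> = (\<Sum>i\<in>{1..k}. of_real (B i) / (z - of_real (ps i)))"
    proof (rule sum.cong[OF refl])
      fix i assume i: "i \<in> {1..k}"
      have Pe: "P z = (z - of_real (ps i)) * (\<Prod>j\<in>{1..k}-{i}. z - of_real (ps j))"
        unfolding P_def using i by (simp add: prod.remove)
      have "(\<Prod>j\<in>{1..k}-{i}. z - of_real (ps j)) \<noteq> 0" using nz Pe by auto
      then show "of_real (B i) * (\<Prod>j\<in>{1..k}-{i}. z - of_real (ps j)) / P z = of_real (B i) / (z - of_real (ps i))"
        unfolding Pe by simp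
    qed
    finally show ?thesis .
  qed
  show ?thesis
  proof (intro allI impI)
    fix z w
    assume H: "(poly (map_poly complex_of_real p) z \<noteq> 0 \<and>
                  poly (map_poly complex_of_real q) z / poly (map_poly complex_of_real p) z
                    = complex_of_real r * exp (\<i> * complex_of_real \<phi>) \<and>
                  cmod (z - complex_of_real ((ps 1 + ps k) / 2)) > (ps k - ps 1) / 2) \<and>
                 (poly (map_poly complex_of_real p) w \<noteq> 0 \<and>
                  poly (map_poly complex_of_real q) w / poly (map_poly complex_of_real p) w
                    = complex_of_real r * exp (\<i> * complex_of_real \<phi>) \<and>
                  cmod (w - complex_of_real ((ps 1 + ps k) / 2)) > (ps k - ps 1) / 2)"
    have Pz: "P z \<noteq> 0" and Pw: "P w \<noteq> 0" using H pz by auto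
    have e1: "poly (map_poly complex_of_real q) z / poly (map_poly complex_of_real p) z
       = poly (map_poly complex_of_real q) w / poly (map_poly complex_of_real p) w"
      using H by simp
    have "of_real (lead_coeff q) * Q z / (of_real (lead_coeff p) * P z)
        = of_real (lead_coeff q) * Q w / (of_real (lead_coeff p) * P w)"
      using e1 by (simp only: pz qz)
    moreover have fac: "\<And>x. of_real (lead_coeff q) * Q x / (of_real (lead_coeff p) * P x)
        = (of_real (lead_coeff q) / of_real (lead_coeff p)) * (Q x / P x)" by simp
    ultimately have "(of_real (lead_coeff q) / of_real (lead_coeff p)) * (Q z / P z)
        = (of_real (lead_coeff q) / of_real (lead_coeff p)) * (Q w / P w)" by (simp only: fac)
    moreover have "(of_real (lead_coeff q) / of_real (lead_coeff p) :: complex) \<noteq> 0" using lp lq by simp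
    ultimately have eqQ: "Q z / P z = Q w / P w" by (metis mult_left_cancel)
    show "z = w"
    proof (rule ccontr)
      assume ne: "z \<noteq> w"
      have nzi: "z - of_real (ps i) \<noteq> 0" "w - of_real (ps i) \<noteq> 0" if "i \<in> {1..k}" for i
        using Pz Pw that unfolding P_def by (auto simp: prod_zero_iff)
      have "0 = (\<Sum>i\<in>{1..k}. of_real (B i) / (z - of_real (ps i))) - (\<Sum>i\<in>{1..k}. of_real (B i) / (w - of_real (ps i)))"
        using eqQ pf[OF Pz] pf[OF Pw] by simp
      also have "\<dots> = (\<Sum>i\<in>{1..k}. (w - z) * (of_real (B i) / ((z - of_real (ps i)) * (w - of_real (ps i)))))"
        unfolding sum_subtractf[symmetric]
      proof (rule sum.cong[OF refl])
        fix i assume i: "i \<in> {1..k}"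
        show "of_real (B i) / (z - of_real (ps i)) - of_real (B i) / (w - of_real (ps i)) =
          (w - z) * (of_real (B i) / ((z - of_real (ps i)) * (w - of_real (ps i))))"
          using nzi[OF i] by (simp add: field_simps)
      qed
      also have "\<dots> = (w - z) * (\<Sum>i\<in>{1..k}. of_real (B i) / ((z - of_real (ps i)) * (w - of_real (ps i))))"
        by (simp add: sum_distrib_left)
      finally have "(\<Sum>i\<in>{1..k}. of_real (B i) / ((z - of_real (ps i)) * (w - of_real (ps i)))) = 0"
        using ne by simp
      moreover have "(\<Sum>i\<in>{1..k}. of_real (B i) / ((z - of_real (ps i)) * (w - of_real (ps i)))) \<noteq> 0"
        by (rule sum_nonzero[OF p1k]) (use H Bpos rng assms(1) in auto)
      ultimately show False by contradiction
    qed
  qed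
qed

end
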